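(* Let $\alpha,\beta,r>0$, $\mu=2\beta r/\alpha$, and let $q(x)=\frac{\alpha}{2\beta}\big(1+\mathbf{W}(-e^{-\mu x-1})\big)$ for $x\ge0$, where $\mathbf{W}$ is the principal-branch Lambert $W$ function (equivalently $q(x)=(\alpha-v_M'(x))/(2\beta)$ with $v_M(x)=\frac{\alpha^2}{4\beta r}[\mathbf{W}(-e^{-\mu x-1})+1]^2$). Consider, for $i=1,2$, the first-order PDE problem $$q(x_1)\frac{\partial v}{\partial x_1}+q(x_2)\frac{\partial v}{\partial x_2}+rv=-q(x_1)q(x_2),\quad x_1,x_2>0,\qquad v(x_1,0)=v(0,x_2)=0.$$ Its solution $v_1^{(1)}$ is given, for $x_1>x_2$, by $$v^{(1)}_1(x_1,x_2)=\frac{\alpha^2}{4\beta^2r}\Big(e^{-rQ(x_2)}\big(1+rQ(x_2)\big)-e^{-rQ(x_1)}\big(1-rQ(x_2)\big)+e^{-r(Q(x_1)+Q(x_2))}-1\Big),$$ where $$Q(x)=\int_0^x\frac{du}{q(u)}=-\frac1r\log\Big(-\mathbf{W}\big(-e^{-\mu x-1}\big)\Big),$$ and, for $x_2\ge x_1$, by the same formula with the roles of $x_1$ and $x_2$ interchanged. The solution $v_2^{(1)}$ of the same problem coincides: $v_2^{(1)}\equiv v_1^{(1)}$.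
   Context: This PDE arises as the first-order term $v_i^{(1)}$ in the expansion $V_i=v_M(x_i)+\gamma v_i^{(1)}+\gamma^2v_i^{(2)}+\cdots$ of the value functions of a deterministic linear-demand Bertrand duopoly in the degree of substitutability $\gamma$. *)

theory Defs
  imports "HOL-Analysis.Analysis"
begin

text \<open>Principal branch of the Lambert W function on [-1/e, \<infinity>):
  the unique w \<ge> -1 with w * exp w = y.\<close>
definition lambertW :: "real \<Rightarrow> real" where
  "lambertW y = (THE w. -1 \<le> w \<and> w * exp w = y)"

definition mu :: "real \<Rightarrow> real \<Rightarrow> real \<Rightarrow> real" where
  "mu \<alpha> \<beta> r = 2 * \<beta> * r / \<alpha>"

definition qfun :: "real \<Rightarrow> real \<Rightarrow> real \<Rightarrow> real \<Rightarrow> real" where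
  "qfun \<alpha> \<beta> r x = \<alpha> / (2 * \<beta>) * (1 + lambertW (- exp (- mu \<alpha> \<beta> r * x - 1)))"

definition vM :: "real \<Rightarrow> real \<Rightarrow> real \<Rightarrow> real \<Rightarrow> real" where
  "vM \<alpha> \<beta> r x = \<alpha>^2 / (4 * \<beta> * r) * (lambertW (- exp (- mu \<alpha> \<beta> r * x - 1)) + 1)^2"

definition Qfun :: "real \<Rightarrow> real \<Rightarrow> real \<Rightarrow> real \<Rightarrow> real" where
  "Qfun \<alpha> \<beta> r x = - (1 / r) * ln (- lambertW (- exp (- mu \<alpha> \<beta> r * x - 1)))"

definition v1_branch :: "real \<Rightarrow> real \<Rightarrow> real \<Rightarrow> real \<Rightarrow> real \<Rightarrow> real" where
  "v1_branch \<alpha> \<beta> r a b =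
     \<alpha>^2 / (4 * \<beta>^2 * r) *
       (exp (- r * b) * (1 + r * b) - exp (- r * a) * (1 - r * b) + exp (- r * (a + b)) - 1)"

definition v1_formula :: "real \<Rightarrow> real \<Rightarrow> real \<Rightarrow> real \<times> real \<Rightarrow> real" where
  "v1_formula \<alpha> \<beta> r p =
     (case p of (x1, x2) \<Rightarrow>
        if x1 > x2 then v1_branch \<alpha> \<beta> r (Qfun \<alpha> \<beta> r x1) (Qfun \<alpha> \<beta> r x2)
        else v1_branch \<alpha> \<beta> r (Qfun \<alpha> \<beta> r x2) (Qfun \<alpha> \<beta> r x1))"

definition solves_pde :: "(real \<Rightarrow> real) \<Rightarrow> real \<Rightarrow> (real \<times> real \<Rightarrow> real) \<Rightarrow> bool" where
  "solves_pde q r v \<longleftrightarrow>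
     continuous_on {p. 0 \<le> fst p \<and> 0 \<le> snd p} v \<and>
     (\<forall>x1 x2. 0 < x1 \<longrightarrow> 0 < x2 \<longrightarrow>
        (\<exists>D. (v has_derivative D) (at (x1, x2)) \<and>
             q x1 * D (1, 0) + q x2 * D (0, 1) + r * v (x1, x2) = - q x1 * q x2)) \<and>
     (\<forall>x1\<ge>0. v (x1, 0) = 0) \<and> (\<forall>x2\<ge>0. v (0, x2) = 0)"

end

theory Submission
  imports Defs
begin


lemma xexp_strict_mono:
  fixes a b :: real
  assumes "-1 \<le> a" "a < b"
  shows "a * exp a < b * exp b"
proof (rule DERIV_pos_imp_increasing_open[OF assms(2)])
  fix x assume "a < x" "x < b"
  then have "x > -1" using assms by linarith
  show "\<exists>y. ((\<lambda>y. y * exp y) has_real_derivative y) (at x) \<and> 0 < y"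
  proof (rule exI[of _ "exp x + x * exp x"], intro conjI)
    show "((\<lambda>y. y * exp y) has_real_derivative exp x + x * exp x) (at x)"
      by (auto intro!: derivative_eq_intros)
    have "exp x + x * exp x = (1 + x) * exp x" by (simp add: algebra_simps)
    also have "\<dots> > 0" using \<open>x > -1\<close> by simp
    finally show "0 < exp x + x * exp x" .
  qed
next
  show "continuous_on {a..b} (\<lambda>y. y * exp y)" by (intro continuous_intros)
qed

lemma lambertW_eq:
  fixes w :: real
  assumes "-1 \<le> w"
  shows "lambertW (w * exp w) = w"
  unfolding lambertW_def
proof (rule the_equality)
  show "-1 \<le> w \<and> w * exp w = w * exp w" using assms by simp
next
  fix w' assume h: "-1 \<le> w' \<and> w' * exp w' = w * exp w"
  show "w' = w"
  proof (rule linorder_cases[of w' w])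
    assume "w' < w" then show ?thesis using xexp_strict_mono[of w' w] h by auto
  next
    assume "w < w'" then show ?thesis using xexp_strict_mono[of w w'] h assms by auto
  qed
qed




locale bert =
  fixes \<alpha> \<beta> r :: real
  assumes ap: "\<alpha> > 0" and bp: "\<beta> > 0" and rp: "r > 0"
begin

definition X :: "real \<Rightarrow> real" where
  "X s = (r * s + exp (- r * s) - 1) / mu \<alpha> \<beta> r"

abbreviation "Q \<equiv> Qfun \<alpha> \<beta> r"
abbreviation "q \<equiv> qfun \<alpha> \<beta> r"

lemma mu_pos: "mu \<alpha> \<beta> r > 0"
  using ap bp rp by (simp add: mu_def)

lemma r_mu: "r / mu \<alpha> \<beta> r = \<alpha> / (2 * \<beta>)"
  using ap bp rp by (simp add: mu_def field_simps)

lemma W_X: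
  assumes "s \<ge> 0"
  shows "lambertW (- exp (- mu \<alpha> \<beta> r * X s - 1)) = - exp (- r * s)"
proof -
  have "- mu \<alpha> \<beta> r * X s - 1 = - (r * s) + - exp (- r * s)"
    using mu_pos by (simp add: X_def field_simps)
  then have "- exp (- mu \<alpha> \<beta> r * X s - 1) = (- exp (- r * s)) * exp (- exp (- r * s))"
    using exp_add[of "- (r * s)" "- exp (- (r * s))"] by simp
  moreover have "exp (- r * s) \<le> 1" using rp assms by simp
  ultimately show ?thesis using lambertW_eq[of "- exp (- r * s)"] by simp
qed

lemma Q_X: "s \<ge> 0 \<Longrightarrow> Q (X s) = s"
  unfolding Qfun_def using W_X rp by simp

lemma X_0: "X 0 = 0" by (simp add: X_def)

lemma X_deriv: "(X has_real_derivative r * (1 - exp (- r * s)) / mu \<alpha> \<beta> r) (at s)"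
  unfolding X_def using mu_pos by (auto intro!: derivative_eq_intros simp: field_simps)

lemma X_cont: "continuous_on S X"
  unfolding X_def using mu_pos by (intro continuous_intros) auto

lemma X_der_pos: "s > 0 \<Longrightarrow> r * (1 - exp (- r * s)) / mu \<alpha> \<beta> r > 0"
  using rp mu_pos by (simp add: divide_pos_pos)

lemma X_strict:
  assumes "0 \<le> a" "a < b" shows "X a < X b"
proof (rule DERIV_pos_imp_increasing_open[OF assms(2)])
  fix x assume "a < x" "x < b"
  then show "\<exists>y. (X has_real_derivative y) (at x) \<and> 0 < y"
    using X_deriv X_der_pos assms by (meson le_less_trans)
qed (rule X_cont)

lemma X_mono: "0 \<le> a \<Longrightarrow> a \<le> b \<Longrightarrow> X a \<le> X b"
  using X_strict by (metis order_le_less)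

lemma X_nonneg: "0 \<le> s \<Longrightarrow> 0 \<le> X s"
  using X_mono[of 0 s] X_0 by simp

lemma X_pos: "0 < s \<Longrightarrow> 0 < X s"
  using X_strict[of 0 s] X_0 by simp

lemma X_surj:
  assumes "x \<ge> 0" shows "\<exists>s\<ge>0. X s = x"
proof -
  define s0 where "s0 = (x * mu \<alpha> \<beta> r + 1) / r"
  have s0: "s0 \<ge> 0" using assms mu_pos rp by (simp add: s0_def)
  have "r * s0 = x * mu \<alpha> \<beta> r + 1" using rp by (simp add: s0_def)
  then have "X s0 = (x * mu \<alpha> \<beta> r + exp (- r * s0)) / mu \<alpha> \<beta> r"
    by (simp add: X_def)
  also have "\<dots> \<ge> (x * mu \<alpha> \<beta> r) / mu \<alpha> \<beta> r"
    using mu_pos by (intro divide_right_mono) auto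
  finally have "x \<le> X s0" using mu_pos by simp
  then obtain s where "0 \<le> s" "s \<le> s0" "X s = x"
    using IVT'[of X 0 x s0] X_0 assms s0 X_cont by auto
  then show ?thesis by auto
qed

lemma XQ: "x \<ge> 0 \<Longrightarrow> X (Q x) = x \<and> Q x \<ge> 0"
  using X_surj Q_X by metis

lemma Q_0: "Q 0 = 0"
  using Q_X[of 0] X_0 by simp

lemma Q_pos: "x > 0 \<Longrightarrow> Q x > 0"
  using XQ[of x] X_0 by (metis less_eq_real_def order_less_irrefl)

lemma W_Q: "x \<ge> 0 \<Longrightarrow> lambertW (- exp (- mu \<alpha> \<beta> r * x - 1)) = - exp (- r * Q x)"
  using XQ W_X by metis

lemma q_Q: "x \<ge> 0 \<Longrightarrow> q x = \<alpha> / (2 * \<beta>) * (1 - exp (- r * Q x))"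
  unfolding qfun_def using W_Q by simp

lemma q_pos: "x > 0 \<Longrightarrow> q x > 0"
  using q_Q[of x] Q_pos[of x] ap bp rp by simp

lemma Q_le: "0 \<le> x \<Longrightarrow> x \<le> X T \<Longrightarrow> 0 \<le> T \<Longrightarrow> Q x \<le> T"
  using XQ[of x] X_strict[of T "Q x"] by force

lemma Q_cont_XT:
  assumes "T \<ge> 0" shows "continuous_on {0..X T} Q"
proof -
  have "continuous_on (X ` {0..T}) Q"
    by (rule continuous_on_inv) (auto simp: X_cont Q_X)
  moreover have "{0..X T} \<subseteq> X ` {0..T}"
  proof
    fix x assume "x \<in> {0..X T}"
    then have "x = X (Q x)" "Q x \<in> {0..T}" using XQ Q_le assms by auto
    then show "x \<in> X ` {0..T}" by blast
  qed
  ultimately show ?thesis using continuous_on_subset by blast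
qed

lemma Q_cont_within:
  assumes "x \<ge> 0" shows "continuous (at x within {0..}) Q"
proof -
  define T where "T = Q x + 1"
  have T: "T \<ge> 0" using XQ assms by (simp add: T_def)
  have xT: "x < X T" using XQ[OF assms] X_strict[of "Q x" T] by (simp add: T_def)
  have "continuous (at x within {0..X T}) Q"
    using Q_cont_XT[OF T] xT assms unfolding continuous_on_eq_continuous_within by auto
  then have "(Q \<longlongrightarrow> Q x) (at x within {0..X T})" by (simp add: continuous_within)
  moreover have "eventually (\<lambda>y. y \<in> {0..X T} \<longleftrightarrow> y \<in> {0..}) (at x)"
    using order_tendstoD(2)[OF tendsto_ident_at xT] by eventually_elim auto
  ultimately have "(Q \<longlongrightarrow> Q x) (at x within {0..})" by (rule Lim_transform_within_set)
  then show ?thesis by (simp add: continuous_within)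
qed

lemma Q_cont: "continuous_on {0..} Q"
  using Q_cont_within continuous_on_eq_continuous_within by auto

lemma Q_isCont:
  assumes "x > 0" shows "isCont Q x"
proof -
  have "continuous (at x within {0..}) Q" using Q_cont_within assms by simp
  then show ?thesis using assms
    by (metis at_within_open greaterThan_iff less_imp_le open_greaterThan continuous_within_subset
        atLeast_iff subsetI)
qed

lemma Q_deriv:
  assumes "x > 0" shows "(Q has_real_derivative 1 / q x) (at x)"
proof -
  have "(Q has_real_derivative inverse (r * (1 - exp (- r * Q x)) / mu \<alpha> \<beta> r)) (at x)"
    by (rule DERIV_inverse_function[where a=0 and b="x+1"])
       (use X_deriv X_der_pos[OF Q_pos[OF assms]] assms XQ Q_isCont in \<open>auto\<close>)
  moreover have "inverse (r * (1 - exp (- r * Q x)) / mu \<alpha> \<beta> r) = 1 / q x"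
  proof -
    have "exp (- r * Q x) < 1" using Q_pos[OF assms] rp by simp
    then have "\<alpha> - \<alpha> * exp (- (r * Q x)) \<noteq> 0" "1 - exp (- (r * Q x)) \<noteq> 0" using ap by auto
    then show ?thesis
      using assms ap bp rp by (simp add: q_Q[OF less_imp_le[OF assms]] mu_def field_simps)
  qed
  ultimately show ?thesis by simp
qed

end



context bert begin

lemma vM_deriv:
  assumes x: "x > 0"
  shows "(vM \<alpha> \<beta> r has_real_derivative (\<alpha> - 2 * \<beta> * q x)) (at x)"
proof -
  let ?g = "\<lambda>y. \<alpha>^2 / (4 * \<beta> * r) * (1 - exp (- r * Q y))^2"
  have e: "exp (- r * Q x) < 1" using Q_pos[OF x] rp by simp
  have "(?g has_real_derivative (\<alpha> - 2 * \<beta> * q x)) (at x)"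
    apply (rule derivative_eq_intros refl Q_deriv[OF x] | simp)+
    using e ap bp rp x Q_pos[OF x] by (simp add: q_Q[OF less_imp_le[OF x]] power2_eq_square, simp add: divide_simps, simp add: algebra_simps)
  then show ?thesis
  proof (rule has_field_derivative_transform_within_open[where S="{0<..}"])
    fix y :: real assume "y \<in> {0<..}"
    then show "?g y = vM \<alpha> \<beta> r y" unfolding vM_def using W_Q[of y] by (simp add: power2_eq_square algebra_simps)
  qed (use x in auto)
qed

lemma Q_integral:
  assumes x: "x \<ge> 0"
  shows "((\<lambda>u. 1 / q u) has_integral Q x) {0..x}"
proof -
  have "((\<lambda>u. 1 / q u) has_integral (Q x - Q 0)) {0..x}"
  proof (rule fundamental_theorem_of_calculus_interior[OF x])
    show "continuous_on {0..x} Q" using Q_cont by (rule continuous_on_subset) auto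
    fix y assume "y \<in> {0<..<x}"
    then show "(Q has_vector_derivative 1 / q y) (at y)"
      using Q_deriv has_real_derivative_iff_has_vector_derivative by auto
  qed
  then show ?thesis using Q_0 by simp
qed

end



context bert begin

definition "Cc = \<alpha>^2 / (4 * \<beta>^2 * r)"
definition "Ba a b = Cc * (r * exp (- r * a) * (1 - r * b) - r * exp (- r * (a + b)))"
definition "Bb a b = Cc * (- (r^2 * b * exp (- r * b)) + r * exp (- r * a) - r * exp (- r * (a + b)))"
abbreviation "B \<equiv> v1_branch \<alpha> \<beta> r"

lemma B_identity:
  "Ba a b + Bb a b + r * B a b = - (\<alpha> / (2 * \<beta>) * (1 - exp (- r * a))) * (\<alpha> / (2 * \<beta>) * (1 - exp (- r * b)))"
proof -
  have e: "exp (- r * (a + b)) = exp (- r * a) * exp (- r * b)"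
    by (simp add: exp_add[symmetric] algebra_simps)
  show ?thesis using ap bp rp
    unfolding Ba_def Bb_def Cc_def v1_branch_def e
    by (simp add: field_simps power2_eq_square)
qed

lemma B_zero: "B a 0 = 0"
  unfolding v1_branch_def by simp

lemma Ba_Bb_diag: "Ba a a = Bb a a"
  unfolding Ba_def Bb_def by (simp add: algebra_simps power2_eq_square)

lemma Qc_deriv:
  assumes "(g has_derivative g') (at x within S)" "g x > 0"
  shows "((\<lambda>x. Q (g x)) has_derivative (\<lambda>h. g' h * (1 / q (g x)))) (at x within S)"
  using DERIV_compose_FDERIV[OF Q_deriv[OF assms(2)] assms(1)] by simp

lemma F_deriv:
  assumes "x1 > 0" "x2 > 0"
  shows "((\<lambda>p. B (Q (fst p)) (Q (snd p))) has_derivative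
     (\<lambda>h. Ba (Q x1) (Q x2) * (1 / q x1) * fst h + Bb (Q x1) (Q x2) * (1 / q x2) * snd h)) (at (x1, x2) within S)"
  unfolding v1_branch_def
  apply (rule derivative_eq_intros refl Qc_deriv | simp add: assms)+
  using rp q_pos[OF assms(1)] q_pos[OF assms(2)] bp
  apply (simp add: fun_eq_iff Ba_def Bb_def Cc_def field_simps power2_eq_square)
  done

end



lemma has_derivative_Un_within:
  "(f has_derivative D) (at x within s) \<Longrightarrow> (f has_derivative D) (at x within t) \<Longrightarrow>
   (f has_derivative D) (at x within s \<union> t)"
  unfolding has_derivative_within by (auto simp: Lim_within_Un)

context bert begin

abbreviation "V \<equiv> v1_formula \<alpha> \<beta> r"

lemma G_deriv:
  assumes "x1 > 0" "x2 > 0"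
  shows "((\<lambda>p. B (Q (snd p)) (Q (fst p))) has_derivative
     (\<lambda>h. Bb (Q x2) (Q x1) * (1 / q x1) * fst h + Ba (Q x2) (Q x1) * (1 / q x2) * snd h)) (at (x1, x2) within S)"
  unfolding v1_branch_def
  apply (rule derivative_eq_intros refl Qc_deriv | simp add: assms)+
  using rp q_pos[OF assms(1)] q_pos[OF assms(2)] bp
  apply (simp add: fun_eq_iff Ba_def Bb_def Cc_def field_simps power2_eq_square)
  done

lemma V_alt: "V p = B (Q (max (fst p) (snd p))) (Q (min (fst p) (snd p)))"
  by (cases p) (auto simp: v1_formula_def max_def min_def)

lemma Q_comp_cont:
  "continuous_on S g \<Longrightarrow> (\<And>x. x \<in> S \<Longrightarrow> g x \<ge> 0) \<Longrightarrow> continuous_on S (\<lambda>x. Q (g x))"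
  by (rule continuous_on_compose2[OF Q_cont]) auto

lemma V_cont: "continuous_on {p. 0 \<le> fst p \<and> 0 \<le> snd p} V"
  unfolding V_alt v1_branch_def
  by (intro continuous_intros Q_comp_cont) auto

lemma pde_F:
  assumes "x1 > 0" "x2 > 0"
  shows "q x1 * (Ba (Q x1) (Q x2) * (1 / q x1)) + q x2 * (Bb (Q x1) (Q x2) * (1 / q x2))
         + r * B (Q x1) (Q x2) = - q x1 * q x2"
proof -
  have h1: "q x1 * (Ba (Q x1) (Q x2) * (1 / q x1)) = Ba (Q x1) (Q x2)" using q_pos[OF assms(1)] by simp
  have h2: "q x2 * (Bb (Q x1) (Q x2) * (1 / q x2)) = Bb (Q x1) (Q x2)" using q_pos[OF assms(2)] by simp
  have h3: "q x1 * q x2 = (\<alpha> / (2 * \<beta>) * (1 - exp (- r * Q x1))) * (\<alpha> / (2 * \<beta>) * (1 - exp (- r * Q x2)))"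
    using q_Q[OF less_imp_le[OF assms(1)]] q_Q[OF less_imp_le[OF assms(2)]] by simp
  show ?thesis unfolding h1 h2 B_identity using h3 by (simp only: mult_minus_left)
qed

lemma V_pde:
  assumes x1: "x1 > 0" and x2: "x2 > 0"
  shows "\<exists>D. (V has_derivative D) (at (x1, x2)) \<and>
             q x1 * D (1, 0) + q x2 * D (0, 1) + r * V (x1, x2) = - q x1 * q x2"
proof -
  define DF where "DF = (\<lambda>h. Ba (Q x1) (Q x2) * (1 / q x1) * fst h + Bb (Q x1) (Q x2) * (1 / q x2) * snd h)"
  define DG where "DG = (\<lambda>h. Bb (Q x2) (Q x1) * (1 / q x1) * fst h + Ba (Q x2) (Q x1) * (1 / q x2) * snd h)"
  have F: "\<And>S. ((\<lambda>p. B (Q (fst p)) (Q (snd p))) has_derivative DF) (at (x1, x2) within S)"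
    unfolding DF_def by (rule F_deriv[OF x1 x2])
  have G: "\<And>S. ((\<lambda>p. B (Q (snd p)) (Q (fst p))) has_derivative DG) (at (x1, x2) within S)"
    unfolding DG_def by (rule G_deriv[OF x1 x2])
  have pF: "q x1 * DF (1, 0) + q x2 * DF (0, 1) + r * B (Q x1) (Q x2) = - q x1 * q x2"
    unfolding DF_def using pde_F[OF x1 x2] by simp
  have pG: "q x1 * DG (1, 0) + q x2 * DG (0, 1) + r * B (Q x2) (Q x1) = - q x1 * q x2"
    unfolding DG_def using pde_F[OF x2 x1] by (simp add: algebra_simps)
  consider "x1 > x2" | "x1 < x2" | "x1 = x2" by linarith
  then show ?thesis
  proof cases
    case 1
    have "(V has_derivative DF) (at (x1, x2))"
    proof (rule has_derivative_transform_within_open[OF F])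
      show "open {p::real\<times>real. snd p < fst p}"
        by (intro open_Collect_less continuous_intros)
    qed (use 1 in \<open>auto simp: v1_formula_def\<close>)
    then show ?thesis using pF 1 by (auto simp: v1_formula_def)
  next
    case 2
    have "(V has_derivative DG) (at (x1, x2))"
    proof (rule has_derivative_transform_within_open[OF G])
      show "open {p::real\<times>real. fst p < snd p}"
        by (intro open_Collect_less continuous_intros)
    qed (use 2 in \<open>auto simp: v1_formula_def\<close>)
    then show ?thesis using pG 2 by (auto simp: v1_formula_def)
  next
    case 3
    have DFG: "DF = DG" unfolding DF_def DG_def 3 using Ba_Bb_diag by (simp add: fun_eq_iff algebra_simps)
    have a: "(V has_derivative DF) (at (x1, x2) within {p. snd p \<le> fst p})"
      by (rule has_derivative_transform_within[OF F, where d=1]) (use 3 in \<open>auto simp: v1_formula_def\<close>)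
    have b: "(V has_derivative DF) (at (x1, x2) within {p. fst p \<le> snd p})"
      unfolding DFG
      by (rule has_derivative_transform_within[OF G, where d=1]) (use 3 in \<open>auto simp: v1_formula_def\<close>)
    have "{p::real\<times>real. snd p \<le> fst p} \<union> {p. fst p \<le> snd p} = UNIV" by auto
    then have "(V has_derivative DF) (at (x1, x2))"
      using has_derivative_Un_within[OF a b] by simp
    then show ?thesis using pF 3 by (auto simp: v1_formula_def)
  qed
qed

lemma V_solves: "solves_pde q r V"
  unfolding solves_pde_def
proof (intro conjI allI impI)
  show "continuous_on {p. 0 \<le> fst p \<and> 0 \<le> snd p} V" by (rule V_cont)
next
  fix x1 x2 :: real assume "0 < x1" "0 < x2"
  then show "\<exists>D. (V has_derivative D) (at (x1, x2)) \<and>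
             q x1 * D (1, 0) + q x2 * D (0, 1) + r * V (x1, x2) = - q x1 * q x2"
    by (rule V_pde)
next
  fix x1 :: real assume "0 \<le> x1"
  then show "V (x1, 0) = 0" using B_zero Q_0 by (simp add: V_alt max_def min_def)
next
  fix x2 :: real assume "0 \<le> x2"
  then show "V (0, x2) = 0" using B_zero Q_0 by (simp add: V_alt max_def min_def)
qed

end



lemma lin2:
  fixes D :: "real \<times> real \<Rightarrow> real"
  assumes "bounded_linear D"
  shows "D (a, b) = a * D (1, 0) + b * D (0, 1)"
proof -
  have l: "linear D" using assms bounded_linear.linear by blast
  have "(a, b) = a *\<^sub>R (1::real, 0::real) + b *\<^sub>R (0, 1)" by simp
  then have "D (a, b) = D (a *\<^sub>R (1, 0) + b *\<^sub>R (0, 1))" by simp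
  also have "\<dots> = a *\<^sub>R D (1, 0) + b *\<^sub>R D (0, 1)"
    by (simp only: linear_add[OF l] linear_cmul[OF l])
  finally show ?thesis by simp
qed

context bert begin

lemma Xq:
  assumes "s \<ge> 0" shows "r * (1 - exp (- r * s)) / mu \<alpha> \<beta> r = q (X s)"
proof -
  have "q (X s) = \<alpha> / (2 * \<beta>) * (1 - exp (- r * s))"
    using q_Q[OF X_nonneg[OF assms]] Q_X[OF assms] by simp
  then show ?thesis using ap bp rp by (simp add: mu_def)
qed

lemma comp_deriv:
  fixes v :: "real \<times> real \<Rightarrow> real"
  assumes sv: "solves_pde q r v" and c1: "c1 + t > 0" and c2: "c2 + t > 0"
  shows "((\<lambda>t. v (X (c1 + t), X (c2 + t))) has_real_derivative
           - q (X (c1 + t)) * q (X (c2 + t)) - r * v (X (c1 + t), X (c2 + t))) (at t)"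
proof -
  let ?d1 = "r * (1 - exp (- r * (c1 + t))) / mu \<alpha> \<beta> r"
  let ?d2 = "r * (1 - exp (- r * (c2 + t))) / mu \<alpha> \<beta> r"
  have p1: "X (c1 + t) > 0" "X (c2 + t) > 0" using X_pos c1 c2 by auto
  obtain D where D: "(v has_derivative D) (at (X (c1 + t), X (c2 + t)))"
    and eq: "q (X (c1 + t)) * D (1, 0) + q (X (c2 + t)) * D (0, 1) + r * v (X (c1 + t), X (c2 + t))
             = - q (X (c1 + t)) * q (X (c2 + t))"
    using sv p1 unfolding solves_pde_def by blast
  have g1: "((\<lambda>t. X (c1 + t)) has_real_derivative ?d1) (at t)"
  proof -
    have "((\<lambda>t. c1 + t) has_real_derivative 1) (at t)" by (auto intro!: derivative_eq_intros)
    from DERIV_chain2[OF X_deriv this] show ?thesis by simp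
  qed
  have g2: "((\<lambda>t. X (c2 + t)) has_real_derivative ?d2) (at t)"
  proof -
    have "((\<lambda>t. c2 + t) has_real_derivative 1) (at t)" by (auto intro!: derivative_eq_intros)
    from DERIV_chain2[OF X_deriv this] show ?thesis by simp
  qed
  have g: "((\<lambda>t. (X (c1 + t), X (c2 + t))) has_derivative (\<lambda>h. (h * ?d1, h * ?d2))) (at t)"
    using has_derivative_Pair[OF g1[unfolded has_field_derivative_def] g2[unfolded has_field_derivative_def]]
    by (simp add: mult.commute)
  have c: "((\<lambda>t. v (X (c1 + t), X (c2 + t))) has_derivative (\<lambda>h. D (h * ?d1, h * ?d2))) (at t)"
    using has_derivative_compose[OF g D] by simp
  have bl: "bounded_linear D" using D has_derivative_bounded_linear by blast
  have "(\<lambda>h. D (h * ?d1, h * ?d2)) = (*) (- q (X (c1 + t)) * q (X (c2 + t)) - r * v (X (c1 + t), X (c2 + t)))"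
  proof
    fix h
    have "D (h * ?d1, h * ?d2) = h * (?d1 * D (1, 0) + ?d2 * D (0, 1))"
      by (subst lin2[OF bl]) (simp add: algebra_simps)
    also have "?d1 * D (1, 0) + ?d2 * D (0, 1) = q (X (c1 + t)) * D (1, 0) + q (X (c2 + t)) * D (0, 1)"
      using Xq[of "c1 + t"] Xq[of "c2 + t"] c1 c2 by simp
    finally have calc: "D (h * ?d1, h * ?d2) = h * (q (X (c1 + t)) * D (1, 0) + q (X (c2 + t)) * D (0, 1))" .
    have e2: "q (X (c1 + t)) * D (1, 0) + q (X (c2 + t)) * D (0, 1) = - q (X (c1 + t)) * q (X (c2 + t)) - r * v (X (c1 + t), X (c2 + t))"
      using eq by linarith
    show "D (h * ?d1, h * ?d2) = (- q (X (c1 + t)) * q (X (c2 + t)) - r * v (X (c1 + t), X (c2 + t))) * h"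
      unfolding calc e2 by (rule mult.commute)
  qed
  with c show ?thesis unfolding has_field_derivative_def by metis
qed

end



context bert begin

lemma X_comp_cont: "continuous_on S f \<Longrightarrow> continuous_on S (\<lambda>t. X (f t))"
  by (rule continuous_on_compose2[OF X_cont[of UNIV]]) auto

lemma uniq:
  assumes s1: "solves_pde q r v1" and s2: "solves_pde q r v2" and x1: "x1 \<ge> 0" and x2: "x2 \<ge> 0"
  shows "v1 (x1, x2) = v2 (x1, x2)"
proof (cases "x1 = 0 \<or> x2 = 0")
  case True
  then show ?thesis using s1 s2 x1 x2 unfolding solves_pde_def by auto
next
  case False
  then have x1p: "x1 > 0" and x2p: "x2 > 0" using x1 x2 by auto
  define a where "a = Q x1"
  define b where "b = Q x2"
  define m where "m = min a b"
  define c1 where "c1 = a - m"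
  define c2 where "c2 = b - m"
  have mp: "m > 0" using Q_pos x1p x2p by (simp add: m_def a_def b_def)
  have c1n: "c1 \<ge> 0" and c2n: "c2 \<ge> 0" by (auto simp: c1_def c2_def m_def)
  have c0: "c1 = 0 \<or> c2 = 0" by (auto simp: c1_def c2_def m_def min_def)
  define f where "f = (\<lambda>t. v1 (X (c1 + t), X (c2 + t)) - v2 (X (c1 + t), X (c2 + t)))"
  define h where "h = (\<lambda>t. exp (r * t) * f t)"
  have h0: "h 0 = 0"
  proof -
    have "X (c1 + 0) \<ge> 0" "X (c2 + 0) \<ge> 0" using X_nonneg c1n c2n by auto
    then have "f 0 = 0" using c0 s1 s2 X_0 unfolding solves_pde_def f_def by auto
    then show ?thesis by (simp add: h_def)
  qed
  have hm: "h m = exp (r * m) * (v1 (x1, x2) - v2 (x1, x2))"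
  proof -
    have e1: "X (c1 + m) = x1" using XQ[OF x1] unfolding c1_def a_def by simp
    have e2: "X (c2 + m) = x2" using XQ[OF x2] unfolding c2_def b_def by simp
    show ?thesis by (simp only: h_def f_def e1 e2)
  qed
  have quad: "(\<lambda>t. (X (c1 + t), X (c2 + t))) ` {0..m} \<subseteq> {p. 0 \<le> fst p \<and> 0 \<le> snd p}"
  proof
    fix p assume "p \<in> (\<lambda>t. (X (c1 + t), X (c2 + t))) ` {0..m}"
    then obtain t where t: "t \<in> {0..m}" "p = (X (c1 + t), X (c2 + t))" by blast
    have "0 \<le> X (c1 + t)" "0 \<le> X (c2 + t)" using X_nonneg c1n c2n t(1) by auto
    then show "p \<in> {p. 0 \<le> fst p \<and> 0 \<le> snd p}" using t(2) by simp
  qed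
  have gc: "continuous_on {0..m} (\<lambda>t. (X (c1 + t), X (c2 + t)))"
    by (intro continuous_intros X_comp_cont)
  have v1c: "continuous_on {0..m} (\<lambda>t. v1 (X (c1 + t), X (c2 + t)))"
    using continuous_on_compose2[OF _ gc quad, of v1] s1 unfolding solves_pde_def by auto
  have v2c: "continuous_on {0..m} (\<lambda>t. v2 (X (c1 + t), X (c2 + t)))"
    using continuous_on_compose2[OF _ gc quad, of v2] s2 unfolding solves_pde_def by auto
  have hc: "continuous_on {0..m} h"
    unfolding h_def f_def by (intro continuous_intros v1c v2c)
  have hd: "(h has_real_derivative 0) (at t)" if t: "0 < t" "t < m" for t
  proof -
    have ct1: "c1 + t > 0" and ct2: "c2 + t > 0" using c1n c2n t by auto
    note d1 = comp_deriv[OF s1 ct1 ct2] and d2 = comp_deriv[OF s2 ct1 ct2]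
    show ?thesis unfolding h_def f_def
      by (rule derivative_eq_intros refl d1 d2 | simp)+ (simp add: algebra_simps)
  qed
  obtain l z where z: "0 < z" "z < m" "(h has_real_derivative l) (at z)" and hl: "h m - h 0 = (m - 0) * l"
    using MVT[OF mp hc] hd real_differentiable_def by (metis has_field_derivative_imp_has_derivative differentiableI)
  have "l = 0" using DERIV_unique[OF z(3) hd[OF z(1,2)]] .
  then have "h m = 0" using hl h0 by simp
  then show ?thesis using hm by simp
qed

end

theorem proposition3p2:
  fixes \<alpha> \<beta> r :: real
  assumes "\<alpha> > 0" and "\<beta> > 0" and "r > 0"
  shows "(\<forall>x>0. (vM \<alpha> \<beta> r has_real_derivative (\<alpha> - 2 * \<beta> * qfun \<alpha> \<beta> r x)) (at x))
     \<and> (\<forall>x\<ge>0. ((\<lambda>u. 1 / qfun \<alpha> \<beta> r u) has_integral Qfun \<alpha> \<beta> r x) {0..x})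
     \<and> solves_pde (qfun \<alpha> \<beta> r) r (v1_formula \<alpha> \<beta> r)
     \<and> (\<forall>v. solves_pde (qfun \<alpha> \<beta> r) r v \<longrightarrow>
           (\<forall>x1\<ge>0. \<forall>x2\<ge>0. v (x1, x2) = v1_formula \<alpha> \<beta> r (x1, x2)))"
proof -
  interpret bert \<alpha> \<beta> r using assms by unfold_locales
  show ?thesis using vM_deriv Q_integral V_solves uniq[OF _ V_solves] by auto
qed

end
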